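(* Let $e\in\mathbb{Z}/2$ and $n\in2\mathbb{N}$. Then $\sum_{\Delta\in{}^{\gamma_e}\mathfrak{A}^n_0}(-1)^{{}^ej_\Delta}$ equals $0$ if $n\ge4$, equals $-1$ if $n=2$, and equals $1$ if $n=0$.
   Context: $k$ is an algebraic closure of $\mathbb{F}_q$, $q$ odd; $k^\triangle=k\setminus\{0,1,-1\}$. Define permutations of $k^\triangle$: $\alpha(\lambda)=\lambda^{-1}$, $\beta(\lambda)=-\lambda$, $\gamma(\lambda)=\lambda^q$, and $\gamma_e=\beta^e\gamma$ for $e\in\mathbb{Z}/2$. $\Omega_{\alpha,\gamma_e}$ is the set of orbits on $k^\triangle$ of the group generated by $\alpha,\gamma_e$; $\Omega'_{\alpha,\gamma_e}$ is the set of those orbits which are a single $\gamma_e$-orbit. For a monic $\Delta\in k[X]$ with $\Delta(0)\ne0$, write $\Delta=\prod_{\lambda\in k^*}(X-\lambda)^{n^\Delta_\lambda}$. $\mathfrak{A}^n_0$ is the set of such $\Delta$ of degree $n$ with $n^\Delta_{\lambda^{-1}}=n^\Delta_\lambda$ for all $\lambda$ and $n^\Delta_1=n^\Delta_{-1}=0$; ${}^{\gamma_e}\mathfrak{A}^n_0$ is the subset with $n^\Delta_{\gamma_e(\lambda)}=n^\Delta_\lambda$ for all $\lambda\in k^\triangle$. For such $\Delta$ and an orbit $\mathcal{O}\in\Omega_{\alpha,\gamma_e}$, $n^\Delta_{\mathcal{O}}$ is the common value of $n^\Delta_\lambda$, $\lambda\in\mathcal{O}$, and ${}^ej_\Delta=\sum_{\mathcal{O}\in\Omega'_{\alpha,\gamma_e}}n^\Delta_{\mathcal{O}}\in\mathbb{Z}/2$.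 *)

theory Defs
  imports "HOL-Computational_Algebra.Polynomial"
begin

definition ktri :: "'k::field set" where
  "ktri = UNIV - {0, 1, -1}"

text \<open>alpha(l) = l^-1; gamma_e = beta^e gamma, gamma_e(l) = (-1)^e l^q.\<close>
definition alpha :: "'k::field \<Rightarrow> 'k" where
  "alpha l = inverse l"

definition gamma_e :: "nat \<Rightarrow> nat \<Rightarrow> 'k::field \<Rightarrow> 'k" where
  "gamma_e q e l = (-1) ^ e * l ^ q"

text \<open>Orbit of l under the group generated by alpha and gamma_e (these commute,
 and gamma_e has finite orbits, so nonnegative powers suffice).\<close>
definition orb_ag :: "nat \<Rightarrow> nat \<Rightarrow> 'k::field \<Rightarrow> 'k set" where
  "orb_ag q e l = {((gamma_e q e) ^^ b) l | b. True} \<union> {alpha (((gamma_e q e) ^^ b) l) | b. True}"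

definition orb_g :: "nat \<Rightarrow> nat \<Rightarrow> 'k::field \<Rightarrow> 'k set" where
  "orb_g q e l = {((gamma_e q e) ^^ b) l | b. True}"

definition Omega :: "nat \<Rightarrow> nat \<Rightarrow> 'k::field set set" where
  "Omega q e = {orb_ag q e l | l. l \<in> ktri}"

definition Omega' :: "nat \<Rightarrow> nat \<Rightarrow> 'k::field set set" where
  "Omega' q e = {Ob \<in> Omega q e. \<exists>l\<in>Ob. Ob = orb_g q e l}"

definition nmult :: "'k::field poly \<Rightarrow> 'k \<Rightarrow> nat" where
  "nmult D l = order l D"

definition A0 :: "nat \<Rightarrow> 'k::field poly set" where
  "A0 n = {D. lead_coeff D = 1 \<and> degree D = n \<and> poly D 0 \<noteq> 0 \<and>
      (\<forall>l. l \<noteq> 0 \<longrightarrow> nmult D (inverse l) = nmult D l) \<and>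
      nmult D 1 = 0 \<and> nmult D (-1) = 0}"

definition gA0 :: "nat \<Rightarrow> nat \<Rightarrow> nat \<Rightarrow> 'k::field poly set" where
  "gA0 q e n = {D \<in> A0 n. \<forall>l\<in>ktri. nmult D (gamma_e q e l) = nmult D l}"

text \<open>n^Delta_O, the common value on the orbit (via a representative).\<close>
definition nO :: "'k::field poly \<Rightarrow> 'k set \<Rightarrow> nat" where
  "nO D Ob = nmult D (SOME l. l \<in> Ob)"

text \<open>{}^e j_Delta, as a natural number whose parity is the element of Z/2;
  only orbits with nonzero multiplicity contribute (finitely many).\<close>
definition jD :: "nat \<Rightarrow> nat \<Rightarrow> 'k::field poly \<Rightarrow> nat" where
  "jD q e D = (\<Sum>Ob\<in>{Ob \<in> Omega' q e. nO D Ob \<noteq> 0}. nO D Ob)"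

text \<open>k is an algebraic closure of F_q: characteristic p, q = p^m,
 algebraically closed, and algebraic over the prime field.\<close>
definition alg_closure_of_Fq :: "'k::field itself \<Rightarrow> nat \<Rightarrow> bool" where
  "alg_closure_of_Fq _ q \<longleftrightarrow>
     (\<exists>p m. prime p \<and> m > 0 \<and> q = p ^ m \<and> CHAR('k) = p) \<and>
     (\<forall>P :: 'k poly. degree P \<ge> 1 \<longrightarrow> (\<exists>x. poly P x = 0)) \<and>
     (\<forall>x :: 'k. \<exists>r > 0. x ^ (q ^ r) = x)"

end

theory Submission
  imports Defs
begin

locale setting =
  fixes q e :: nat and ty :: "'k::field itself"
  assumes qodd: "odd q" and e2: "e < 2" and q0: "of_nat q = (0::'k)"
    and closed: "\<And>P::'k poly. degree P \<ge> 1 \<Longrightarrow> \<exists>x. poly P x = 0"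
    and fin: "\<And>x::'k. \<exists>r>0. x^(q^r) = x"
begin

abbreviation g :: "'k \<Rightarrow> 'k" where "g \<equiv> gamma_e q e"

lemma q_pos: "q > 0" using qodd by (cases q) auto

lemma neg1_pow_q: "(-1::'k)^q = -1" using qodd by simp

lemma g_iter: "(g ^^ N) l = (-1)^(e*N) * l^(q^N)"
proof (induction N)
  case 0 then show ?case by simp
next
  case (Suc N)
  have "(g ^^ Suc N) l = (-1)^e * ((g^^N) l)^q"
    by (simp add: gamma_e_def)
  also have "\<dots> = (-1)^e * ((-1)^(e*N) * l^(q^N))^q"
    using Suc by simp
  also have "\<dots> = (-1)^e * ((-1)^(e*N))^q * (l^(q^N))^q"
    by (simp only: power_mult_distrib mult.assoc)
  also have "((-1::'k)^(e*N))^q = ((-1)^q)^(e*N)"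
    by (simp only: power_mult[symmetric] mult.commute)
  also have "(l^(q^N))^q = l^(q^Suc N)"
    by (simp only: power_mult[symmetric] power_Suc mult.commute)
  also have "(-1::'k)^e * ((-1)^q)^(e*N) = (-1)^(e*Suc N)"
    by (simp only: neg1_pow_q power_add[symmetric] mult_Suc_right)
  finally show ?case by simp
qed

lemma pow_iter: "x^(q^r) = x \<Longrightarrow> x^(q^(r*t)) = (x::'k)"
proof (induction t)
  case 0 then show ?case by simp
next
  case (Suc t)
  have "x^(q^(r*Suc t)) = (x^(q^r))^(q^(r*t))"
    by (simp add: power_add power_mult[symmetric] mult.commute)
  then show ?case using Suc by simp
qed

lemma per: "\<exists>R>0. (g ^^ R) x = x"
proof -
  obtain r where r: "r > 0" "x^(q^r) = x" using fin by blast
  have ev: "(-1::'k)^(e*(2*r)) = 1" by (simp add: neg_one_even_power)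
  have "(g ^^ (2*r)) x = x^(q^(r*2))"
    by (simp only: g_iter ev) (simp add: mult.commute)
  also have "\<dots> = x" using pow_iter[OF r(2)] by blast
  finally show ?thesis using r(1) by (intro exI[of _ "2*r"]) auto
qed

lemma two_ne0: "(2::'k) \<noteq> 0"
proof
  assume h: "(2::'k) = 0"
  obtain t where "q = 2*t+1" using qodd oddE by blast
  then have "of_nat q = (2::'k) * of_nat t + 1" by simp
  then show False using h q0 by simp
qed

lemma one_ne_neg1: "(1::'k) \<noteq> -1"
  using two_ne0 by (metis one_add_one add_eq_0_iff)

lemma g_inverse: "g (inverse l) = inverse (g l)"
  by (simp add: gamma_e_def power_inverse[symmetric] nonzero_inverse_mult_distrib inverse_mult_distrib)

lemma giter_inverse: "(g ^^ N) (inverse l) = inverse ((g ^^ N) l)"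
  by (induction N) (simp_all add: g_inverse)

lemma g_bad: "x \<in> {0,1,-1} \<Longrightarrow> g x \<in> {(0::'k),1,-1}"
  using e2 q_pos qodd by (auto simp: gamma_e_def less_2_cases_iff)

lemma giter_bad: "x \<in> {0,1,-1} \<Longrightarrow> (g^^N) x \<in> {(0::'k),1,-1}"
  by (induction N) (use g_bad in auto)

lemma g_ktri: "l \<in> ktri \<Longrightarrow> g l \<in> ktri"
proof (rule ccontr)
  assume l: "l \<in> ktri" "g l \<notin> ktri"
  obtain R where R: "R > 0" "(g^^R) l = l" using per by blast
  obtain R' where R': "R = Suc R'" using R(1) not0_implies_Suc by blast
  have "(g^^R) l = (g^^(R-1)) (g l)" unfolding R' by (simp only: funpow_Suc_right o_apply diff_Suc_1)
  also have "\<dots> \<in> {0,1,-1}" using l(2) giter_bad by (auto simp: ktri_def)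
  finally show False using R l(1) by (auto simp: ktri_def)
qed

lemma giter_ktri: "l \<in> ktri \<Longrightarrow> (g^^N) l \<in> ktri"
  by (induction N) (auto intro: g_ktri)

lemma inverse_ktri: "l \<in> ktri \<Longrightarrow> inverse l \<in> ktri"
proof -
  assume l: "l \<in> ktri"
  have a: "inverse l \<noteq> 0" using l by (simp add: ktri_def)
  have b: "inverse l \<noteq> 1"
  proof
    assume "inverse l = 1"
    then have "inverse (inverse l) = inverse 1" by (rule arg_cong)
    then show False using l by (simp add: ktri_def)
  qed
  have c: "inverse l \<noteq> -1"
  proof
    assume "inverse l = -1"
    then have "inverse (inverse l) = inverse (-1)" by (rule arg_cong)
    then show False using l by (simp add: ktri_def)
  qed
  show ?thesis using a b c by (simp add: ktri_def)
qed


definition per_of :: "'k \<Rightarrow> nat" where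
  "per_of l = (LEAST R. R > 0 \<and> (g^^R) l = l)"

abbreviation Orb :: "'k \<Rightarrow> 'k set" where "Orb l \<equiv> orb_ag q e l"

lemma per_props: "per_of l > 0" "(g^^per_of l) l = l"
proof -
  obtain R where "R > 0 \<and> (g^^R) l = l" using per by blast
  then have "per_of l > 0 \<and> (g^^per_of l) l = l"
    unfolding per_of_def by (rule LeastI)
  then show "per_of l > 0" "(g^^per_of l) l = l" by auto
qed

lemma per_min: "0 < R \<Longrightarrow> R < per_of l \<Longrightarrow> (g^^R) l \<noteq> l"
  unfolding per_of_def using not_less_Least by blast

lemma giter_mult_per: "(g^^(per_of l * t)) l = l"
proof (induction t)
  case 0 then show ?case by simp
next
  case (Suc t)
  have "(g^^(per_of l * Suc t)) l = (g^^(per_of l)) ((g^^(per_of l * t)) l)"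
    by (simp add: funpow_add)
  then show ?case using Suc per_props(2) by simp
qed

lemma giter_mod: "(g^^a) l = (g^^(a mod per_of l)) l"
proof -
  have "(g^^a) l = (g^^(a mod per_of l)) ((g^^(per_of l * (a div per_of l))) l)"
    by (metis funpow_add o_apply mod_mult_div_eq add.commute)
  then show ?thesis by (simp add: giter_mult_per)
qed

lemma giter_eq_iff: "(g^^a) l = (g^^b) l \<longleftrightarrow> a mod per_of l = b mod per_of l"
proof
  assume "a mod per_of l = b mod per_of l"
  then show "(g^^a) l = (g^^b) l" by (metis giter_mod)
next
  assume h: "(g^^a) l = (g^^b) l"
  define r where "r = per_of l"
  have r: "r > 0" using per_props r_def by simp
  define a' b' where "a' = a mod r" and "b' = b mod r"
  have ab: "(g^^a') l = (g^^b') l" using h giter_mod unfolding a'_def b'_def r_def by metis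
  have lt: "a' < r" "b' < r" using r unfolding a'_def b'_def by auto
  have main: "x = y" if xy: "(g^^x) l = (g^^y) l" "x < r" "y < r" "x \<le> y" for x y
  proof (rule ccontr)
    assume "x \<noteq> y"
    then have "x < y" using xy by simp
    have "(g^^(r - y + x)) l = (g^^(r-y)) ((g^^x) l)" by (simp add: funpow_add)
    also have "\<dots> = (g^^(r-y)) ((g^^y) l)" using xy by simp
    also have "\<dots> = (g^^(r - y + y)) l" by (simp add: funpow_add)
    also have "\<dots> = l" using xy per_props r_def by simp
    finally have "(g^^(r - y + x)) l = l" .
    moreover have "0 < r - y + x" "r - y + x < r" using \<open>x < y\<close> xy(3) by auto
    ultimately show False using per_min[of "r - y + x" l] r_def by simp
  qed
  have "a' = b'"
  proof (cases "a' \<le> b'")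
    case True then show ?thesis using main[OF ab lt] by simp
  next
    case False then show ?thesis using main[OF ab[symmetric] lt(2) lt(1)] by simp
  qed
  then show "a mod per_of l = b mod per_of l" unfolding a'_def b'_def r_def .
qed

lemma orb_g_eq: "orb_g q e l = (\<lambda>i. (g^^i) l) ` {..<per_of l}"
proof -
  have "(g^^b) l \<in> (\<lambda>i. (g^^i) l) ` {..<per_of l}" for b
    using giter_mod[of b l] per_props(1)[of l] by (intro image_eqI[of _ _ "b mod per_of l"]) auto
  then show ?thesis unfolding orb_g_def by auto
qed

lemma card_orb_g: "card (orb_g q e l) = per_of l"
proof -
  have "inj_on (\<lambda>i. (g^^i) l) {..<per_of l}"
    by (auto simp: inj_on_def giter_eq_iff)
  then show ?thesis by (simp add: orb_g_eq card_image)
qed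

lemma finite_orb_g: "finite (orb_g q e (l::'k))"
  by (simp add: orb_g_eq)

lemma Orb_eq: "Orb l = orb_g q e l \<union> inverse ` orb_g q e l"
  unfolding orb_ag_def orb_g_def alpha_def by auto

lemma finite_Orb: "finite (Orb l)"
  by (simp add: Orb_eq finite_orb_g)

lemma in_Orb: "l \<in> Orb l"
  unfolding orb_ag_def by (auto intro: exI[of _ 0])

lemma Orb_ne: "Orb l \<noteq> {}" using in_Orb by blast

lemma giter_in_Orb: "(g^^b) l \<in> Orb l"
  unfolding orb_ag_def by auto

lemma inv_giter_in_Orb: "inverse ((g^^b) l) \<in> Orb l"
  unfolding orb_ag_def alpha_def by auto

lemma Orb_cases: "x \<in> Orb l \<Longrightarrow> (\<And>b. x = (g^^b) l \<Longrightarrow> P) \<Longrightarrow> (\<And>b. x = inverse ((g^^b) l) \<Longrightarrow> P) \<Longrightarrow> P"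
  unfolding orb_ag_def alpha_def by auto

lemma Orb_g_closed: "x \<in> Orb l \<Longrightarrow> g x \<in> Orb l"
proof (erule Orb_cases)
  fix b assume "x = (g^^b) l"
  then show "g x \<in> Orb l" using giter_in_Orb[of "Suc b" l] by simp
next
  fix b assume "x = inverse ((g^^b) l)"
  then show "g x \<in> Orb l" using inv_giter_in_Orb[of "Suc b" l] by (simp add: g_inverse)
qed

lemma Orb_giter_closed: "x \<in> Orb l \<Longrightarrow> (g^^N) x \<in> Orb l"
  by (induction N) (auto intro: Orb_g_closed)

lemma Orb_inv_closed: "x \<in> Orb l \<Longrightarrow> inverse x \<in> Orb l"
proof (erule Orb_cases)
  fix b assume "x = (g^^b) l"
  then show "inverse x \<in> Orb l" using inv_giter_in_Orb by simp
next
  fix b assume "x = inverse ((g^^b) l)"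
  then show "inverse x \<in> Orb l" using giter_in_Orb by simp
qed

lemma Orb_sub: "x \<in> Orb l \<Longrightarrow> Orb x \<subseteq> Orb l"
proof
  fix y assume x: "x \<in> Orb l" and y: "y \<in> Orb x"
  from y show "y \<in> Orb l"
    by (rule Orb_cases) (use x Orb_giter_closed Orb_inv_closed in auto)
qed

lemma back_Orb: "l \<in> Orb ((g^^b) l)"
proof -
  have "(g^^(per_of l * b - b)) ((g^^b) l) = (g^^(per_of l * b - b + b)) l"
    by (simp add: funpow_add)
  also have "per_of l * b - b + b = per_of l * b"
    using per_props(1)[of l] by simp
  finally have "(g^^(per_of l * b - b)) ((g^^b) l) = l" using giter_mult_per by simp
  then show ?thesis using giter_in_Orb by metis
qed

lemma Orb_sym: "x \<in> Orb l \<Longrightarrow> l \<in> Orb x"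
proof (erule Orb_cases)
  fix b assume "x = (g^^b) l"
  then show "l \<in> Orb x" using back_Orb by simp
next
  fix b assume x: "x = inverse ((g^^b) l)"
  have "l \<in> Orb ((g^^b) l)" by (rule back_Orb)
  also have "(g^^b) l = inverse x" using x by simp
  also have "Orb (inverse x) \<subseteq> Orb x"
    by (rule Orb_sub) (rule Orb_inv_closed[OF in_Orb])
  finally show "l \<in> Orb x" .
qed

lemma Orb_eq_of_mem: "x \<in> Orb l \<Longrightarrow> Orb x = Orb l"
  using Orb_sub Orb_sym by blast

lemma Orb_ktri: "l \<in> ktri \<Longrightarrow> Orb l \<subseteq> ktri"
proof
  fix x assume l: "l \<in> ktri" and x: "x \<in> Orb l"
  from x show "x \<in> ktri"
    by (rule Orb_cases) (use l giter_ktri inverse_ktri in auto)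
qed


lemma l_ne_inv: "l \<in> ktri \<Longrightarrow> inverse l \<noteq> (l::'k)"
proof
  assume l: "l \<in> ktri" and h: "inverse l = l"
  have l0: "l \<noteq> 0" using l by (simp add: ktri_def)
  have "l * l = 1" using h l0 by (metis right_inverse)
  then have "(l - 1) * (l + 1) = 0" by (simp add: algebra_simps)
  then have "l - 1 = 0 \<or> l + 1 = 0" by simp
  then have "l = 1 \<or> l = -1" by (auto simp: eq_neg_iff_add_eq_0)
  then show False using l by (auto simp: ktri_def)
qed

definition symm :: "'k \<Rightarrow> bool" where "symm l \<longleftrightarrow> (\<exists>s. (g^^s) l = inverse l)"

lemma symm_Orb: "symm l \<Longrightarrow> Orb l = orb_g q e l"
proof -
  assume "symm l"
  then obtain s where s: "(g^^s) l = inverse l" unfolding symm_def by blast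
  have "inverse ((g^^b) l) = (g^^(b+s)) l" for b
    by (simp add: funpow_add s giter_inverse[symmetric])
  then have "inverse ` orb_g q e l \<subseteq> orb_g q e l" unfolding orb_g_def by auto
  then show ?thesis using Orb_eq by auto
qed

lemma symm_card: "symm l \<Longrightarrow> card (Orb l) = per_of l"
  using symm_Orb card_orb_g by simp

lemma nonsymm_card: "\<not> symm l \<Longrightarrow> card (Orb l) = 2 * per_of l"
proof -
  assume ns: "\<not> symm l"
  have disj: "orb_g q e l \<inter> inverse ` orb_g q e l = {}"
  proof (rule ccontr)
    assume "orb_g q e l \<inter> inverse ` orb_g q e l \<noteq> {}"
    then obtain x where x: "x \<in> orb_g q e l" "x \<in> inverse ` orb_g q e l" by blast
    obtain a where xa: "x = (g^^a) l" using x(1) unfolding orb_g_def by auto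
    obtain b where xb: "x = inverse ((g^^b) l)" using x(2) unfolding orb_g_def by auto
    have ab: "(g^^a) l = inverse ((g^^b) l)" using xa xb by simp
    define t where "t = per_of l * b - b"
    have tb: "t + b = per_of l * b" using per_props(1)[of l] unfolding t_def by simp
    have "(g^^(t + a)) l = (g^^t) (inverse ((g^^b) l))" by (simp add: funpow_add ab)
    also have "\<dots> = inverse ((g^^(t+b)) l)" by (simp add: giter_inverse funpow_add)
    also have "\<dots> = inverse l" using tb giter_mult_per by simp
    finally show False using ns unfolding symm_def by blast
  qed
  have "inj_on inverse (orb_g q e l)" by (auto simp: inj_on_def)
  then have "card (inverse ` orb_g q e l) = per_of l" by (simp add: card_image card_orb_g)
  then show ?thesis using Orb_eq card_Un_disjoint[OF finite_orb_g _ disj] finite_orb_g card_orb_g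
    by simp
qed

lemma symm_half:
  assumes l: "l \<in> ktri" and sy: "symm l"
  shows "\<exists>h. h > 0 \<and> per_of l = 2*h \<and> (g^^h) l = inverse l"
proof -
  obtain s where s: "(g^^s) l = inverse l" using sy unfolding symm_def by blast
  define r where "r = per_of l"
  have r: "r > 0" using per_props r_def by simp
  have "(g^^(s+s)) l = l" by (simp add: funpow_add s giter_inverse)
  then have d1: "(s+s) mod r = 0" using giter_eq_iff[of "s+s" l 0] r_def by simp
  have "(g^^s) l \<noteq> l" using s l_ne_inv[OF l] by simp
  then have d2: "s mod r \<noteq> 0" using giter_eq_iff[of s l 0] r_def by simp
  obtain t where t: "s + s = r * t" using d1 by auto
  have "odd t"
  proof
    assume "even t"
    then obtain u where "t = 2*u" by auto
    then have "s = r * u" using t by simp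
    then show False using d2 by simp
  qed
  then obtain u where u: "t = 2*u+1" using oddE by blast
  have "s + s = 2*(r*u) + r" using t u by (simp add: algebra_simps)
  then have "even r" by presburger
  then obtain h where h: "r = 2*h" by auto
  have sh: "s = r*u + h" using \<open>s + s = 2*(r*u) + r\<close> h by simp
  have hpos: "h > 0" using r h by simp
  have "s mod r = h mod r" using sh h hpos by simp
  then have "(g^^h) l = (g^^s) l" using giter_eq_iff r_def by simp
  then show ?thesis using s h hpos r_def by auto
qed

lemma Orb_in_Omega: "l \<in> ktri \<Longrightarrow> Orb l \<in> Omega q e"
  unfolding Omega_def by blast

lemma Omega'_iff: "l \<in> ktri \<Longrightarrow> (Orb l \<in> Omega' q e) = symm l"
proof
  assume l: "l \<in> ktri" and "Orb l \<in> Omega' q e"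
  then obtain \<mu> where mu: "\<mu> \<in> Orb l" "Orb l = orb_g q e \<mu>" unfolding Omega'_def by blast
  obtain a where a: "l = (g^^a) \<mu>" using in_Orb[of l] mu(2) unfolding orb_g_def by auto
  obtain b where b: "inverse l = (g^^b) \<mu>"
    using Orb_inv_closed[OF in_Orb[of l]] mu(2) unfolding orb_g_def by auto
  define R where "R = per_of \<mu>"
  have ta: "R * a - a + a = R * a" using per_props(1)[of \<mu>] unfolding R_def by simp
  have "(g^^(R*a - a)) l = (g^^(R*a - a + a)) \<mu>" by (simp add: a funpow_add)
  also have "\<dots> = \<mu>" using ta giter_mult_per R_def by simp
  finally have m: "(g^^(R*a - a)) l = \<mu>" .
  have "(g^^(b + (R*a - a))) l = inverse l" by (simp add: funpow_add m b)
  then show "symm l" unfolding symm_def by blast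
next
  assume l: "l \<in> ktri" and "symm l"
  then show "Orb l \<in> Omega' q e"
    unfolding Omega'_def using Orb_in_Omega symm_Orb in_Orb by blast
qed

lemma inv_const:
  fixes f :: "'k \<Rightarrow> nat"
  assumes inv: "\<And>x. f (inverse x) = f x" and gi: "\<And>x. x \<in> ktri \<Longrightarrow> f (g x) = f x"
    and l: "l \<in> ktri" and x: "x \<in> Orb l"
  shows "f x = f l"
proof -
  have it: "f ((g^^b) l) = f l" for b
  proof (induction b)
    case 0 then show ?case by simp
  next
    case (Suc b) then show ?case using gi[OF giter_ktri[OF l, of b]] by simp
  qed
  from x show ?thesis by (rule Orb_cases) (use it inv in auto)
qed

definition eps :: "'k \<Rightarrow> int" where
  "eps l = (if Orb l \<in> Omega' q e then -1 else 1)"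

definition chi :: "nat \<Rightarrow> 'k \<Rightarrow> int" where
  "chi k l = (if card (Orb l) dvd k then eps l ^ (k div card (Orb l)) else 0)"

lemma chi_eq:
  assumes l: "l \<in> ktri"
  shows "chi k l = (if even k then (if (g^^(k div 2)) l = l then 1 else 0)
                    - (if (g^^(k div 2)) l = inverse l then 1 else 0) else 0)"
proof (cases "symm l")
  case True
  obtain h where h: "h > 0" "per_of l = 2*h" "(g^^h) l = inverse l"
    using symm_half[OF l True] by blast
  have c: "card (Orb l) = 2*h" using symm_card[OF True] h by simp
  have ep: "eps l = -1" using Omega'_iff[OF l] True eps_def by simp
  have fix_iff: "(g^^N) l = l \<longleftrightarrow> N mod (2*h) = 0" for N
    using giter_eq_iff[of N l 0] h by simp
  have inv_iff: "(g^^N) l = inverse l \<longleftrightarrow> N mod (2*h) = h" for N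
    using giter_eq_iff[of N l h] h by simp
  show ?thesis
  proof (cases "even k")
    case False
    then have "\<not> card (Orb l) dvd k" using c by auto
    then show ?thesis using False by (simp add: chi_def)
  next
    case True
    then obtain N where N: "k = 2*N" by auto
    show ?thesis
    proof (cases "h dvd N")
      case True
      then obtain m where m: "N = h*m" by auto
      have kd: "k div card (Orb l) = m" using c N m h by simp
      have md: "N mod (2*h) = h * (m mod 2)" using m
        by (metis mult.commute mult_mod_right)
      have dv: "card (Orb l) dvd k" using c N m by simp
      show ?thesis
      proof (cases "even m")
        case True
        then show ?thesis using md dv kd ep h N fix_iff inv_iff
          by (simp add: chi_def)
      next
        case False
        then have "m mod 2 = 1" by presburger
        then show ?thesis using False md dv kd ep h N fix_iff inv_iff
          by (simp add: chi_def)
      qed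
    next
      case False
      have nd: "\<not> card (Orb l) dvd k" using c N False by simp
      have a1: "N mod (2*h) \<noteq> 0"
      proof
        assume "N mod (2*h) = 0"
        then have "2*h dvd N" by (simp add: dvd_eq_mod_eq_0)
        then have "h dvd N" using dvd_mult_right by blast
        then show False using False by simp
      qed
      have a2: "N mod (2*h) \<noteq> h"
      proof
        assume "N mod (2*h) = h"
        then have "N = 2*h*(N div (2*h)) + h" by (metis div_mult_mod_eq mult.commute)
        then have "h dvd N" by (metis dvd_add_right_iff dvd_mult2 dvd_refl dvd_triv_right mult.commute)
        then show False using False by simp
      qed
      show ?thesis using nd a1 a2 N fix_iff inv_iff by (simp add: chi_def)
    qed
  qed
next
  case False
  define r where "r = per_of l"
  have r: "r > 0" using per_props r_def by simp
  have c: "card (Orb l) = 2*r" using nonsymm_card[OF False] r_def by simp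
  have ep: "eps l = 1" using Omega'_iff[OF l] False eps_def by simp
  have ni: "(g^^N) l \<noteq> inverse l" for N using False symm_def by blast
  have fix_iff: "(g^^N) l = l \<longleftrightarrow> r dvd N" for N
    using giter_eq_iff[of N l 0] r_def by (simp add: dvd_eq_mod_eq_0)
  show ?thesis
  proof (cases "even k")
    case False
    then have "\<not> card (Orb l) dvd k" using c by auto
    then show ?thesis using False by (simp add: chi_def)
  next
    case True
    then obtain N where N: "k = 2*N" by auto
    have "card (Orb l) dvd k \<longleftrightarrow> r dvd N" using c N by simp
    then show ?thesis using N ep ni fix_iff by (simp add: chi_def)
  qed
qed


lemma factor:
  fixes p :: "'k poly"
  assumes "p \<noteq> 0"
  shows "\<exists>A. size A = degree p \<and> p = smult (lead_coeff p) (\<Prod>x\<in>#A. [:-x, 1:])"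
  using assms
proof (induction "degree p" arbitrary: p rule: less_induct)
  case (less p)
  show ?case
  proof (cases "degree p = 0")
    case True
    thus ?thesis
      by (intro exI[of _ "{#}"]) (auto elim!: degree_eq_zeroE)
  next
    case False
    then obtain x where x: "poly p x = 0"
      using closed[of p] by auto
    hence "[:-x, 1:] dvd p"
      using poly_eq_0_iff_dvd by blast
    then obtain q where p_eq: "p = [:-x, 1:] * q"
      by (elim dvdE)
    have "q \<noteq> 0"
      using less.prems p_eq by auto
    moreover from this have deg: "degree p = Suc (degree q)"
      unfolding p_eq by (subst degree_mult_eq) auto
    ultimately obtain A where A: "size A = degree q" "q = smult (lead_coeff q) (\<Prod>x\<in>#A. [:-x, 1:])"
      using less.hyps[of q] by auto
    have "smult (lead_coeff p) (\<Prod>y\<in>#add_mset x A. [:- y, 1:]) =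
          [:- x, 1:] * smult (lead_coeff q) (\<Prod>y\<in>#A. [:- y, 1:])"
      unfolding p_eq lead_coeff_mult by simp
    also note A(2) [symmetric]
    also note p_eq [symmetric]
    finally show ?thesis using A(1)
      by (intro exI[of _ "add_mset x A"]) (auto simp: deg)
  qed
qed

end

definition pm :: "'a::field multiset \<Rightarrow> 'a poly" where
  "pm A = (\<Prod>x\<in>#A. [:-x, 1:])"

lemma pm_ne0: "pm A \<noteq> 0"
  by (induction A) (simp_all add: pm_def del: mult_pCons_left)

lemma order_lin: "order a [:-x, 1:] = (if a = x then 1 else (0::nat))"
proof (cases "a = x")
  case True
  then show ?thesis using order_power_n_n[of a 1] by simp
next
  case False
  then show ?thesis by (simp add: order_0I)
qed

lemma order_pm: "order a (pm A) = count A a"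
proof (induction A)
  case empty
  then show ?case by (simp add: pm_def order_0I)
next
  case (add x A)
  have "pm (add_mset x A) = [:-x, 1:] * pm A" by (simp add: pm_def del: mult_pCons_left)
  moreover have "[:-x, 1:] * pm A \<noteq> 0" using pm_ne0[of A] by (simp del: mult_pCons_left)
  ultimately show ?case using add by (simp add: order_mult order_lin del: mult_pCons_left)
qed

lemma degree_pm: "degree (pm A) = size A"
proof (induction A)
  case empty then show ?case by (simp add: pm_def)
next
  case (add x A)
  have "pm (add_mset x A) = [:-x, 1:] * pm A" by (simp add: pm_def del: mult_pCons_left)
  then show ?case using add pm_ne0[of A] by (simp add: degree_mult_eq del: mult_pCons_left)
qed

lemma lead_pm: "lead_coeff (pm A) = 1"
proof (induction A)
  case empty then show ?case by (simp add: pm_def)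
next
  case (add x A)
  have "pm (add_mset x A) = [:-x, 1:] * pm A" by (simp add: pm_def del: mult_pCons_left)
  then show ?case using add by (simp add: lead_coeff_mult del: mult_pCons_left)
qed

lemma poly_pm_0: "poly (pm A) a = 0 \<longleftrightarrow> a \<in># A"
  using order_root[of "pm A" a] pm_ne0[of A] by (simp add: order_pm)

lemma pm_inj: "pm A = pm B \<Longrightarrow> A = B"
  by (metis multiset_eqI order_pm)

context setting begin

lemma monic_eq_pm: "lead_coeff (p::'k poly) = 1 \<Longrightarrow> \<exists>A. size A = degree p \<and> p = pm A"
proof -
  assume h: "lead_coeff p = 1"
  then have "p \<noteq> 0" by auto
  then show ?thesis using factor[of p] h by (auto simp: pm_def)
qed

lemma card_roots:
  assumes c: "c \<noteq> 0" and m: "of_nat m \<noteq> (0::'k)" "m \<ge> 1"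
  shows "card {x::'k. x^m = c} = m"
proof -
  define P where "P = monom (1::'k) m + [:-c:]"
  have degP: "degree P = m"
    unfolding P_def using m(2) by (subst degree_add_eq_left) (auto simp: degree_monom_eq)
  have "coeff [:-c:] m = 0" using m(2) by (cases m) auto
  then have lcP: "lead_coeff P = 1" using degP by (simp add: P_def)
  have polyP: "poly P x = x^m - c" for x by (simp add: P_def poly_monom)
  obtain A where A: "size A = m" "P = pm A" using monic_eq_pm[OF lcP] degP by auto
  have roots: "{x. x^m = c} = set_mset A"
    using poly_pm_0[of A] polyP A(2) by auto
  have cnt: "count A x \<le> 1" for x
  proof (rule ccontr)
    assume "\<not> count A x \<le> 1"
    then have "count A x \<ge> 2" by simp
    define B where "B = A - {#x, x#}"
    have B: "A = add_mset x (add_mset x B)"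
    proof (rule multiset_eqI)
      fix y
      show "count A y = count (add_mset x (add_mset x B)) y"
      proof (cases "y = x")
        case True
        have "count B x = count A x - 2" unfolding B_def by simp
        then show ?thesis using True \<open>count A x \<ge> 2\<close> by simp
      next
        case False
        have "count B y = count A y" unfolding B_def using False by simp
        then show ?thesis using False by simp
      qed
    qed
    define u where "u = [:-x, 1:]"
    have Pu: "P = u * u * pm B" using A(2) B by (simp add: pm_def u_def mult.assoc del: mult_pCons_left)
    have "poly (pderiv P) x = 0"
    proof -
      have u0: "poly u x = 0" by (simp add: u_def)
      have "pderiv P = u * pderiv (u * pm B) + (u * pm B) * pderiv u"
      proof -
        have e: "P = u * (u * pm B)" using Pu by (simp only: mult.assoc)
        show ?thesis unfolding e by (rule pderiv_mult)
      qed
      then have "poly (pderiv P) x = poly u x * poly (pderiv (u * pm B)) x + (poly u x * poly (pm B) x) * poly (pderiv u) x"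
        by (simp only: poly_add poly_mult)
      then show ?thesis by (simp only: u0 mult_zero_left mult_zero_right add_0_left add_0_right)
    qed
    moreover have "pderiv P = monom (of_nat m) (m - 1)"
      by (simp add: P_def pderiv_add pderiv_monom)
    moreover have "x \<noteq> 0"
    proof
      assume "x = 0"
      then have c0: "count A 0 \<ge> 2" using \<open>count A x \<ge> 2\<close> by simp
      have "0 \<in># A" using c0 by (cases "0 \<in># A") (simp_all add: not_in_iff)
      then have "0^m = c" using roots by auto
      moreover have "(0::'k)^m = 0" using m(2) by (simp add: power_0_left)
      ultimately show False using c by simp
    qed
    ultimately show False using m(1) by (simp add: poly_monom)
  qed
  have "A = mset_set (set_mset A)"
  proof (rule multiset_eqI)
    fix y
    show "count A y = count (mset_set (set_mset A)) y"
    proof (cases "y \<in># A")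
      case True
      then have "count A y > 0" by simp
      then have "count A y = 1" using cnt[of y] by linarith
      then show ?thesis using True by simp
    next
      case False
      then show ?thesis by (simp add: not_in_iff)
    qed
  qed
  then have "size A = card (set_mset A)" by (metis size_mset_set)
  then show ?thesis using roots A(1) by simp
qed

lemma finite_fix_pow: "m \<ge> 2 \<Longrightarrow> finite {x::'k. x^m = x}"
proof -
  assume m: "m \<ge> 2"
  define P where "P = monom (1::'k) m - [:0, 1:]"
  have "coeff [:0, 1:] m = (0::'k)" using m by (cases m; cases "m - 1") auto
  then have "coeff P m = 1" by (simp add: P_def coeff_monom)
  then have "P \<noteq> 0" by auto
  moreover have "{x. x^m = x} = {x. poly P x = 0}" by (simp add: P_def poly_monom)
  ultimately show ?thesis using poly_roots_finite by simp
qed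


definition Mset :: "nat \<Rightarrow> 'k multiset set" where
  "Mset n = {A. size A = n \<and> set_mset A \<subseteq> ktri \<and> (\<forall>x. count A (inverse x) = count A x)
              \<and> (\<forall>x\<in>ktri. count A (g x) = count A x)}"

definition rep :: "'k set \<Rightarrow> 'k" where "rep Ob = (SOME l. l \<in> Ob)"

definition JJ :: "'k multiset \<Rightarrow> nat" where
  "JJ A = (\<Sum>Ob\<in>{Ob \<in> Omega' q e. count A (rep Ob) \<noteq> 0}. count A (rep Ob))"

definition sg :: "'k multiset \<Rightarrow> int" where "sg A = (-1)^JJ A"

definition aa :: "nat \<Rightarrow> int" where "aa n = (\<Sum>A\<in>Mset n. sg A)"

lemma gA0_eq: "gA0 q e n = pm ` Mset n"
proof
  show "pm ` Mset n \<subseteq> gA0 q e n"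
  proof
    fix D assume "D \<in> pm ` Mset n"
    then obtain A where A: "A \<in> Mset n" "D = pm A" by auto
    have sub: "set_mset A \<subseteq> ktri" using A(1) by (simp add: Mset_def)
    have n0: "0 \<notin># A" "1 \<notin># A" "-1 \<notin># A" using sub by (auto simp: ktri_def)
    then have c: "count A 1 = 0" "count A (-1) = 0" by (simp_all add: not_in_iff)
    show "D \<in> gA0 q e n"
      using A n0 c lead_pm[of A] degree_pm[of A] unfolding gA0_def A0_def nmult_def Mset_def
      by (simp add: order_pm lead_pm degree_pm poly_pm_0)
  qed
next
  show "gA0 q e n \<subseteq> pm ` Mset n"
  proof
    fix D :: "'k poly" assume D: "D \<in> gA0 q e n"
    then have lc: "lead_coeff D = 1" and deg: "degree D = n" and p0: "poly D 0 \<noteq> 0"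
      and inv: "\<And>l. l \<noteq> 0 \<Longrightarrow> order (inverse l) D = order l D"
      and o1: "order 1 D = 0" and om1: "order (-1) D = 0"
      and gi: "\<And>l. l \<in> ktri \<Longrightarrow> order (g l) D = order l D"
      unfolding gA0_def A0_def nmult_def by auto
    obtain A where A: "size A = degree D" "D = pm A" using monic_eq_pm[OF lc] by auto
    have cnt: "count A x = order x D" for x using A(2) order_pm[of x A] by simp
    have "order 0 D = 0" using p0 by (rule order_0I)
    then have "0 \<notin># A" "1 \<notin># A" "-1 \<notin># A" using o1 om1 cnt by (simp_all add: not_in_iff)
    then have sub: "set_mset A \<subseteq> ktri" by (auto simp: ktri_def)
    have inv': "count A (inverse x) = count A x" for x
      by (cases "x = 0") (simp_all add: cnt inv)
    have "A \<in> Mset n" unfolding Mset_def using sub inv' A(1) deg gi cnt by simp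
    then show "D \<in> pm ` Mset n" using A(2) by simp
  qed
qed

lemma jD_pm: "jD q e (pm A) = JJ A"
  unfolding jD_def JJ_def nO_def nmult_def order_pm rep_def ..

lemma main_sum: "(\<Sum>D\<in>(gA0 q e n :: 'k poly set). (-1::int) ^ jD q e D) = aa n"
proof -
  have "inj_on pm (Mset n)" by (auto simp: inj_on_def intro: pm_inj)
  then show ?thesis unfolding gA0_eq aa_def sg_def by (simp add: sum.reindex jD_pm)
qed


lemma rep_in: "l \<in> ktri \<Longrightarrow> rep (Orb l) \<in> Orb l"
  unfolding rep_def using in_Orb by (metis someI)

lemma Omega_cases: "Ob \<in> Omega q e \<Longrightarrow> (\<And>l. l \<in> ktri \<Longrightarrow> Ob = Orb l \<Longrightarrow> P) \<Longrightarrow> P"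
  unfolding Omega_def by blast

lemma rep_Orb_iff:
  assumes Ob: "Ob \<in> Omega q e" and l: "l \<in> ktri"
  shows "rep Ob \<in> Orb l \<longleftrightarrow> Ob = Orb l"
proof -
  obtain \<mu> where mu: "\<mu> \<in> ktri" "Ob = Orb \<mu>" using Ob by (rule Omega_cases)
  have r: "rep Ob \<in> Ob" using rep_in[OF mu(1)] mu(2) by simp
  have o: "Orb (rep Ob) = Ob" using Orb_eq_of_mem[OF r[unfolded mu(2)]] mu(2) by simp
  show ?thesis
  proof
    assume "rep Ob \<in> Orb l"
    then have "Orb (rep Ob) = Orb l" by (rule Orb_eq_of_mem)
    then show "Ob = Orb l" using o by simp
  next
    assume "Ob = Orb l"
    then show "rep Ob \<in> Orb l" using r by simp
  qed
qed

lemma Mset_const: "A \<in> Mset n \<Longrightarrow> l \<in> ktri \<Longrightarrow> x \<in> Orb l \<Longrightarrow> count A x = count A l"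
  by (rule inv_const[of "count A"]) (auto simp: Mset_def)

lemma size_sum: "finite S \<Longrightarrow> set_mset A \<subseteq> S \<Longrightarrow> size A = sum (count A) S"
  unfolding size_multiset_overloaded_eq
  by (rule sum.mono_neutral_left) (auto simp: not_in_iff)

lemma Mset_card_le:
  assumes A: "A \<in> Mset n" and l: "l \<in> ktri"
  shows "card (Orb l) * count A l \<le> n"
proof -
  have "card (Orb l) * count A l = (\<Sum>x\<in>Orb l. count A x)"
    using Mset_const[OF A l] by simp
  also have "\<dots> \<le> (\<Sum>x\<in>Orb l \<union> set_mset A. count A x)"
    by (rule sum_mono2) (auto simp: finite_Orb)
  also have "\<dots> = size A" by (rule size_sum[symmetric]) (auto simp: finite_Orb)
  also have "\<dots> = n" using A by (simp add: Mset_def)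
  finally show ?thesis .
qed

definition RR :: "nat \<Rightarrow> 'k set" where "RR k = {l \<in> ktri. card (Orb l) \<le> k}"

lemma q_ge3: "q \<ge> 3"
proof -
  have "q \<noteq> 1" using q0 by auto
  then show ?thesis using qodd q_pos by presburger
qed

lemma per_le_card: "per_of l \<le> card (Orb l)"
  using symm_card nonsymm_card by (cases "symm l") auto

lemma fix2: "(g^^(2*r)) l = l \<Longrightarrow> l^(q^(2*r)) = l"
proof -
  assume h: "(g^^(2*r)) l = l"
  have ev: "(-1::'k)^(e*(2*r)) = 1" by (simp add: neg_one_even_power)
  show ?thesis using h by (simp only: g_iter ev mult_1)
qed

lemma finite_RR: "finite (RR k)"
proof -
  have "RR k \<subseteq> (\<Union>r\<in>{1..k}. {x. x^(q^(2*r)) = x})"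
  proof
    fix l assume l: "l \<in> RR k"
    define r where "r = per_of l"
    have r1: "r \<ge> 1" using per_props r_def by (simp add: Suc_le_eq)
    have rk: "r \<le> k" using l per_le_card[of l] r_def by (simp add: RR_def)
    have "(g^^(2*r)) l = l" using giter_mult_per[of l 2] r_def by (simp add: mult.commute)
    then have "l^(q^(2*r)) = l" by (rule fix2)
    then show "l \<in> (\<Union>r\<in>{1..k}. {x. x^(q^(2*r)) = x})" using r1 rk by auto
  qed
  moreover have "finite {x::'k. x^(q^(2*r)) = x}" if "r \<ge> 1" for r
  proof (rule finite_fix_pow)
    have "q \<le> q^(2*r)" using q_pos that by (simp add: self_le_power)
    then show "2 \<le> q^(2*r)" using q_ge3 by simp
  qed
  ultimately show ?thesis by (meson finite_UN_I finite_atLeastAtMost atLeastAtMost_iff finite_subset)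
qed

lemma Mset_RR: "A \<in> Mset n \<Longrightarrow> set_mset A \<subseteq> RR n"
proof
  fix x assume A: "A \<in> Mset n" and x: "x \<in># A"
  have xk: "x \<in> ktri" using A x by (auto simp: Mset_def)
  have "count A x \<ge> 1" using x by (simp add: Suc_le_eq)
  then have "card (Orb x) \<le> card (Orb x) * count A x" by simp
  then have "card (Orb x) \<le> n" using Mset_card_le[OF A xk] by linarith
  then show "x \<in> RR n" using xk by (simp add: RR_def)
qed

lemma finite_Mset: "finite (Mset n)"
proof -
  have "Mset n \<subseteq> multisets_of_size (RR n) n"
    using Mset_RR by (auto simp: multisets_of_size_def Mset_def)
  then show ?thesis using finite_multisets_of_size[OF finite_RR] finite_subset by blast
qed

lemma inv_Orb_iff: "inverse x \<in> Orb l \<longleftrightarrow> x \<in> Orb l"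
  using Orb_inv_closed by (metis inverse_inverse_eq)

lemma g_Orb_iff: "g x \<in> Orb l \<longleftrightarrow> x \<in> Orb l"
proof
  assume h: "g x \<in> Orb l"
  obtain R' where R': "per_of x = Suc R'" using per_props(1)[of x] not0_implies_Suc by blast
  have "(g^^R') (g x) = (g^^(per_of x)) x" unfolding R' by (simp only: funpow_Suc_right o_apply)
  then have "(g^^R') (g x) = x" using per_props(2) by simp
  then show "x \<in> Orb l" using Orb_giter_closed[OF h, of R'] by simp
next
  assume "x \<in> Orb l" then show "g x \<in> Orb l" by (rule Orb_g_closed)
qed

definition addO :: "nat \<Rightarrow> 'k \<Rightarrow> 'k multiset \<Rightarrow> 'k multiset" where
  "addO j l A = A + repeat_mset j (mset_set (Orb l))"

lemma count_addO: "count (addO j l A) x = count A x + (if x \<in> Orb l then j else 0)"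
  by (simp add: addO_def finite_Orb)

lemma size_addO: "size (addO j l A) = size A + j * card (Orb l)"
  by (simp add: addO_def)

lemma addO_Mset:
  assumes A: "A \<in> Mset m" and l: "l \<in> ktri"
  shows "addO j l A \<in> Mset (m + j * card (Orb l))"
proof -
  have "set_mset (addO j l A) \<subseteq> set_mset A \<union> Orb l"
  proof
    fix x assume "x \<in># addO j l A"
    then have c: "count (addO j l A) x > 0" by simp
    show "x \<in> set_mset A \<union> Orb l"
    proof (cases "x \<in> Orb l")
      case False
      then have "count A x > 0" using c by (simp add: count_addO)
      then show ?thesis by simp
    qed simp
  qed
  also have "\<dots> \<subseteq> ktri" using A Orb_ktri[OF l] by (auto simp: Mset_def)
  finally show ?thesis using A
    by (auto simp: Mset_def size_addO count_addO inv_Orb_iff g_Orb_iff)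
qed

lemma JJ_finite: "finite {Ob \<in> Omega' q e. count A (rep Ob) \<noteq> 0}"
proof -
  have "{Ob \<in> Omega' q e. count A (rep Ob) \<noteq> 0} \<subseteq> Orb ` set_mset A"
  proof
    fix Ob assume h: "Ob \<in> {Ob \<in> Omega' q e. count A (rep Ob) \<noteq> 0}"
    then have Ob: "Ob \<in> Omega q e" by (simp add: Omega'_def)
    obtain \<mu> where mu: "\<mu> \<in> ktri" "Ob = Orb \<mu>" using Ob by (rule Omega_cases)
    have r: "rep Ob \<in> Ob" using rep_in[OF mu(1)] mu(2) by simp
    have o: "Orb (rep Ob) = Ob" using Orb_eq_of_mem[OF r[unfolded mu(2)]] mu(2) by simp
    have "rep Ob \<in># A" using h by (simp add: not_in_iff[symmetric])
    then show "Ob \<in> Orb ` set_mset A" using o by force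
  qed
  then show ?thesis by (rule finite_subset) simp
qed

lemma JJ_addO:
  assumes l: "l \<in> ktri"
  shows "JJ (addO j l A) = JJ A + (if Orb l \<in> Omega' q e then j else 0)"
proof -
  define S where "S = {Ob \<in> Omega' q e. count A (rep Ob) \<noteq> 0}"
  define T where "T = S \<union> ({Orb l} \<inter> Omega' q e)"
  have fT: "finite T" using JJ_finite unfolding T_def S_def by simp
  have TO: "T \<subseteq> Omega' q e" unfolding T_def S_def by auto
  have TOm: "Ob \<in> Omega q e" if "Ob \<in> T" for Ob using TO that by (auto simp: Omega'_def)
  have e1: "JJ A = (\<Sum>Ob\<in>T. count A (rep Ob))"
    unfolding JJ_def by (rule sum.mono_neutral_left) (use fT in \<open>auto simp: T_def S_def\<close>)
  have e2: "JJ (addO j l A) = (\<Sum>Ob\<in>T. count (addO j l A) (rep Ob))"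
    unfolding JJ_def
  proof (rule sum.mono_neutral_left[OF fT])
    show "{Ob \<in> Omega' q e. count (addO j l A) (rep Ob) \<noteq> 0} \<subseteq> T"
    proof
      fix Ob assume h: "Ob \<in> {Ob \<in> Omega' q e. count (addO j l A) (rep Ob) \<noteq> 0}"
      then have Ob: "Ob \<in> Omega q e" "Ob \<in> Omega' q e" by (auto simp: Omega'_def)
      show "Ob \<in> T"
      proof (cases "rep Ob \<in> Orb l")
        case True
        then have "Ob = Orb l" using rep_Orb_iff[OF Ob(1) l] by simp
        then show ?thesis using Ob(2) by (simp add: T_def)
      next
        case False
        then have "count A (rep Ob) \<noteq> 0" using h by (simp add: count_addO)
        then show ?thesis using Ob(2) by (simp add: T_def S_def)
      qed
    qed
  qed (use TO in auto)
  have "(\<Sum>Ob\<in>T. count (addO j l A) (rep Ob))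
        = (\<Sum>Ob\<in>T. count A (rep Ob) + (if Ob = Orb l then j else 0))"
  proof (rule sum.cong[OF refl])
    fix Ob assume "Ob \<in> T"
    then show "count (addO j l A) (rep Ob) = count A (rep Ob) + (if Ob = Orb l then j else 0)"
      using rep_Orb_iff[OF TOm l] by (simp add: count_addO)
  qed
  also have "\<dots> = JJ A + (if Orb l \<in> T then j else 0)"
    by (simp add: sum.distrib e1 fT)
  also have "(Orb l \<in> T) = (Orb l \<in> Omega' q e)" using TO unfolding T_def by auto
  finally show ?thesis using e2 by simp
qed

lemma sg_addO: "l \<in> ktri \<Longrightarrow> sg (addO j l A) = sg A * eps l ^ j"
  by (simp add: sg_def JJ_addO eps_def power_add)

lemma subO:
  assumes B: "B \<in> Mset n" and l: "l \<in> ktri" and j: "j \<le> count B l"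
  shows "\<exists>A \<in> Mset (n - j * card (Orb l)). B = addO j l A"
proof -
  define A where "A = B - repeat_mset j (mset_set (Orb l))"
  have cA: "count A x = count B x - (if x \<in> Orb l then j else 0)" for x
    by (simp add: A_def finite_Orb)
  have ge: "x \<in> Orb l \<Longrightarrow> count B x \<ge> j" for x using Mset_const[OF B l] j by simp
  have BA: "B = addO j l A"
    by (rule multiset_eqI) (use ge in \<open>simp add: count_addO cA\<close>)
  have "size B = n" using B by (simp add: Mset_def)
  then have "size A + j * card (Orb l) = n" using size_addO[of j l A] BA by simp
  then have sz: "size A = n - j * card (Orb l)" by simp
  have "set_mset A \<subseteq> set_mset B" unfolding A_def by (rule Multiset.in_diffD[THEN subsetI])
  then have sub: "set_mset A \<subseteq> ktri" using B by (auto simp: Mset_def)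
  have "A \<in> Mset (n - j * card (Orb l))"
    using B sub sz by (auto simp: Mset_def cA inv_Orb_iff g_Orb_iff)
  then show ?thesis using BA by blast
qed

lemma inner_sum:
  assumes l: "l \<in> ktri"
  shows "(\<Sum>A\<in>{A \<in> Mset n. j \<le> count A l}. sg A)
         = (if j * card (Orb l) \<le> n then eps l ^ j * aa (n - j * card (Orb l)) else 0)"
proof (cases "j * card (Orb l) \<le> n")
  case True
  define m where "m = n - j * card (Orb l)"
  have nm: "n = m + j * card (Orb l)" using True m_def by simp
  have img: "addO j l ` Mset m = {A \<in> Mset n. j \<le> count A l}"
  proof
    show "addO j l ` Mset m \<subseteq> {A \<in> Mset n. j \<le> count A l}"
      using addO_Mset[OF _ l] nm in_Orb[of l] by (auto simp: count_addO)
  next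
    show "{A \<in> Mset n. j \<le> count A l} \<subseteq> addO j l ` Mset m"
      using subO[OF _ l] m_def by blast
  qed
  have inj: "inj_on (addO j l) (Mset m)"
    by (auto simp: inj_on_def addO_def)
  have "(\<Sum>A\<in>{A \<in> Mset n. j \<le> count A l}. sg A) = (\<Sum>A\<in>Mset m. sg (addO j l A))"
    unfolding img[symmetric] by (rule sum.reindex[OF inj, unfolded o_def])
  also have "\<dots> = (\<Sum>A\<in>Mset m. sg A * eps l ^ j)" using sg_addO[OF l] by simp
  also have "\<dots> = (\<Sum>A\<in>Mset m. eps l ^ j * sg A)" by (simp add: mult.commute)
  also have "\<dots> = eps l ^ j * aa m" by (simp add: aa_def sum_distrib_left)
  finally show ?thesis using True m_def by simp
next
  case False
  have "{A \<in> Mset n. j \<le> count A l} = {}"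
  proof (rule ccontr)
    assume "{A \<in> Mset n. j \<le> count A l} \<noteq> {}"
    then obtain A where A: "A \<in> Mset n" "j \<le> count A l" by blast
    have h1: "j * card (Orb l) \<le> count A l * card (Orb l)" using A(2) by (rule mult_le_mono1)
    have h2: "count A l * card (Orb l) \<le> n" using Mset_card_le[OF A(1) l] by (simp only: mult.commute)
    show False using h1 h2 False by linarith
  qed
  then show ?thesis using False by (simp only: sum.empty if_False)
qed


definition pp :: "nat \<Rightarrow> int" where "pp k = (\<Sum>l\<in>RR k. chi k l)"

lemma count_as_sum: "c \<le> n \<Longrightarrow> (\<Sum>j\<in>{1..n}. (if j \<le> c then 1 else 0::int)) = int c"
proof -
  assume c: "c \<le> n"
  have "(\<Sum>j\<in>{1..n}. (if j \<le> c then 1 else 0::int)) = (\<Sum>j\<in>{j\<in>{1..n}. j \<le> c}. 1)"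
    by (rule sum.inter_filter[symmetric]) simp
  also have "{j\<in>{1..n}. j \<le> c} = {1..c}" using c by auto
  finally show ?thesis by simp
qed

lemma card_Orb_pos: "card (Orb l) > 0"
  using finite_Orb Orb_ne by (simp add: card_gt_0_iff)

lemma per_l_sum:
  "(\<Sum>j\<in>{1..n}. (if j * card (Orb l) \<le> n then eps l ^ j * aa (n - j * card (Orb l)) else 0))
   = (\<Sum>k\<in>{1..n}. aa (n - k) * chi k l)"
proof -
  define c where "c = card (Orb l)"
  have c: "c > 0" using card_Orb_pos c_def by simp
  define J where "J = {j\<in>{1..n}. j * c \<le> n}"
  define K where "K = {k\<in>{1..n}. c dvd k}"
  have L: "(\<Sum>j\<in>{1..n}. (if j * c \<le> n then eps l ^ j * aa (n - j * c) else 0))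
           = (\<Sum>j\<in>J. eps l ^ j * aa (n - j * c))"
    unfolding J_def by (rule sum.inter_filter[symmetric]) simp
  have R: "(\<Sum>k\<in>{1..n}. aa (n - k) * chi k l) = (\<Sum>k\<in>K. aa (n - k) * eps l ^ (k div c))"
  proof -
    have "(\<Sum>k\<in>{1..n}. aa (n - k) * chi k l)
          = (\<Sum>k\<in>{1..n}. if c dvd k then aa (n - k) * eps l ^ (k div c) else 0)"
      by (rule sum.cong[OF refl]) (simp add: chi_def c_def)
    also have "\<dots> = (\<Sum>k\<in>K. aa (n - k) * eps l ^ (k div c))"
      unfolding K_def by (rule sum.inter_filter[symmetric]) simp
    finally show ?thesis .
  qed
  have KJ: "K = (\<lambda>j. j * c) ` J"
  proof
    show "K \<subseteq> (\<lambda>j. j * c) ` J"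
    proof
      fix k assume k: "k \<in> K"
      then obtain j where j: "k = c * j" unfolding K_def by auto
      have m1: "1 * j \<le> c * j" using c by (intro mult_le_mono1) simp
      have j1: "j \<ge> 1" using k j unfolding K_def by (cases j) auto
      have jk: "j \<le> k" using j m1 by simp
      have kn: "k \<le> n" using k unfolding K_def by simp
      have jn: "j \<le> n" using jk kn by linarith
      have jc: "j * c \<le> n" using kn j by (simp add: mult.commute)
      have "j \<in> J" unfolding J_def using j1 jn jc by simp
      then show "k \<in> (\<lambda>j. j * c) ` J" using j by (auto simp: mult.commute)
    qed
  next
    show "(\<lambda>j. j * c) ` J \<subseteq> K"
    proof
      fix k assume "k \<in> (\<lambda>j. j * c) ` J"
      then obtain j where j: "j \<in> J" "k = j * c" by auto
      have "1 \<le> j * c" using j c unfolding J_def by simp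
      then show "k \<in> K" using j unfolding J_def K_def by auto
    qed
  qed
  have inj: "inj_on (\<lambda>j. j * c) J" using c by (auto simp: inj_on_def)
  have "(\<Sum>k\<in>K. aa (n - k) * eps l ^ (k div c)) = (\<Sum>j\<in>J. aa (n - j * c) * eps l ^ (j * c div c))"
    unfolding KJ by (rule sum.reindex[OF inj, unfolded o_def])
  also have "\<dots> = (\<Sum>j\<in>J. eps l ^ j * aa (n - j * c))" using c by (simp add: mult.commute)
  finally have X: "(\<Sum>k\<in>K. aa (n - k) * eps l ^ (k div c)) = (\<Sum>j\<in>J. eps l ^ j * aa (n - j * c))" .
  show ?thesis unfolding c_def[symmetric] L R X by (rule refl)
qed

lemma RR_sum_pp:
  assumes k: "1 \<le> k" "k \<le> n"
  shows "(\<Sum>l\<in>RR n. chi k l) = pp k"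
  unfolding pp_def
proof (rule sum.mono_neutral_right[OF finite_RR])
  show "RR k \<subseteq> RR n" using k by (auto simp: RR_def)
  show "\<forall>l\<in>RR n - RR k. chi k l = 0"
  proof
    fix l assume l: "l \<in> RR n - RR k"
    then have "card (Orb l) > k" by (auto simp: RR_def)
    then have "\<not> card (Orb l) dvd k" using k by (auto dest: dvd_imp_le)
    then show "chi k l = 0" by (simp add: chi_def)
  qed
qed

lemma newton: "int n * aa n = (\<Sum>k\<in>{1..n}. aa (n - k) * pp k)"
proof -
  have s1: "int n = (\<Sum>l\<in>RR n. \<Sum>j\<in>{1..n}. (if j \<le> count A l then 1 else 0::int))"
    if A: "A \<in> Mset n" for A
  proof -
    have "n = size A" using A by (simp add: Mset_def)
    also have "\<dots> = (\<Sum>l\<in>RR n. count A l)" by (rule size_sum[OF finite_RR Mset_RR[OF A]])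
    finally have eq: "n = (\<Sum>l\<in>RR n. count A l)" .
    have "int n = int (\<Sum>l\<in>RR n. count A l)" using eq by (rule arg_cong)
    also have "\<dots> = (\<Sum>l\<in>RR n. int (count A l))" by (rule of_nat_sum)
    also have "\<dots> = (\<Sum>l\<in>RR n. \<Sum>j\<in>{1..n}. (if j \<le> count A l then 1 else 0::int))"
    proof (rule sum.cong[OF refl])
      fix l assume l: "l \<in> RR n"
      have "count A l \<le> card (Orb l) * count A l" using card_Orb_pos[of l] by simp
      also have "\<dots> \<le> n" using Mset_card_le[OF A] l by (simp add: RR_def)
      finally show "int (count A l) = (\<Sum>j\<in>{1..n}. (if j \<le> count A l then 1 else 0::int))"
        by (rule count_as_sum[symmetric])
    qed
    finally show ?thesis .
  qed
  have "int n * aa n = (\<Sum>A\<in>Mset n. int n * sg A)" by (simp add: aa_def sum_distrib_left)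
  also have "\<dots> = (\<Sum>A\<in>Mset n. \<Sum>l\<in>RR n. \<Sum>j\<in>{1..n}. (if j \<le> count A l then sg A else 0))"
  proof (rule sum.cong[OF refl])
    fix A assume A: "A \<in> Mset n"
    have ifm: "\<And>P (x::int). (if P then 1 else 0) * x = (if P then x else 0)" by simp
    show "int n * sg A = (\<Sum>l\<in>RR n. \<Sum>j\<in>{1..n}. (if j \<le> count A l then sg A else 0))"
      unfolding s1[OF A] by (simp add: sum_distrib_right ifm)
  qed
  also have "\<dots> = (\<Sum>l\<in>RR n. \<Sum>A\<in>Mset n. \<Sum>j\<in>{1..n}. (if j \<le> count A l then sg A else 0))"
    by (rule sum.swap)
  also have "\<dots> = (\<Sum>l\<in>RR n. \<Sum>j\<in>{1..n}. \<Sum>A\<in>Mset n. (if j \<le> count A l then sg A else 0))"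
    by (rule sum.cong[OF refl]) (rule sum.swap)
  also have "\<dots> = (\<Sum>l\<in>RR n. \<Sum>j\<in>{1..n}. \<Sum>A\<in>{A\<in>Mset n. j \<le> count A l}. sg A)"
    by (simp add: sum.inter_filter finite_Mset)
  also have "\<dots> = (\<Sum>l\<in>RR n. \<Sum>j\<in>{1..n}. (if j * card (Orb l) \<le> n then eps l ^ j * aa (n - j * card (Orb l)) else 0))"
    by (rule sum.cong[OF refl], rule sum.cong[OF refl]) (simp add: inner_sum RR_def)
  also have "\<dots> = (\<Sum>l\<in>RR n. \<Sum>k\<in>{1..n}. aa (n - k) * chi k l)"
    by (rule sum.cong[OF refl]) (rule per_l_sum)
  also have "\<dots> = (\<Sum>k\<in>{1..n}. \<Sum>l\<in>RR n. aa (n - k) * chi k l)"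
    by (rule sum.swap)
  also have "\<dots> = (\<Sum>k\<in>{1..n}. aa (n - k) * pp k)"
    by (rule sum.cong[OF refl]) (simp add: sum_distrib_left[symmetric] RR_sum_pp)
  finally show ?thesis .
qed


lemma per_le: "0 < N \<Longrightarrow> (g^^N) l = l \<Longrightarrow> per_of l \<le> N"
  unfolding per_of_def by (rule Least_le) simp

lemma card_Orb_le_2per: "card (Orb l) \<le> 2 * per_of l"
  using symm_card nonsymm_card by (cases "symm l") auto

lemma fix_in_RR: "l \<in> ktri \<Longrightarrow> 0 < N \<Longrightarrow> (g^^N) l = l \<Longrightarrow> l \<in> RR (2*N)"
  using per_le[of N l] card_Orb_le_2per[of l] by (simp add: RR_def)

lemma inv_in_RR: "l \<in> ktri \<Longrightarrow> 0 < N \<Longrightarrow> (g^^N) l = inverse l \<Longrightarrow> l \<in> RR (2*N)"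
proof -
  assume l: "l \<in> ktri" and N: "0 < N" and h: "(g^^N) l = inverse l"
  have sy: "symm l" using h symm_def by blast
  have "(g^^(N+N)) l = l" by (simp add: funpow_add h giter_inverse)
  then have "per_of l \<le> 2*N" using per_le[of "N+N" l] N by simp
  then show ?thesis using l symm_card[OF sy] by (simp add: RR_def)
qed

lemma card_diff_pm1:
  assumes F: "finite F"
  shows "int (card (F - {1,-1})) = int (card F) - int (card (F \<inter> {1,-1}))"
proof -
  have "card (F \<inter> {1,-1}) \<le> card F" using F by (intro card_mono) auto
  then show ?thesis using card_Diff_subset_Int[of F "{1,-1}"] F by simp
qed

lemma pp_val: "k \<ge> 1 \<Longrightarrow> pp k = (if even k then -2 else 0)"
proof -
  assume k: "k \<ge> 1"
  have pp1: "pp k = (\<Sum>l\<in>RR k. (if even k then (if (g^^(k div 2)) l = l then 1 else 0)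
                    - (if (g^^(k div 2)) l = inverse l then 1 else 0) else 0))"
    unfolding pp_def by (rule sum.cong[OF refl]) (simp add: chi_eq RR_def)
  show ?thesis
  proof (cases "even k")
    case False
    then show ?thesis using pp1 by simp
  next
    case True
    then obtain N where N: "k = 2*N" by auto
    have N0: "N > 0" using N k by simp
    have kd: "k div 2 = N" using N by simp
    define Q where "Q = q^N"
    define c where "c = (-1::'k)^(e*N)"
    have cc: "c * c = 1" unfolding c_def by (simp add: power_add[symmetric] neg_one_even_power)
    have c0: "c \<noteq> 0" using cc by auto
    have gN: "(g^^N) l = c * l^Q" for l by (simp add: g_iter c_def Q_def)
    have "q \<le> q^N" using q_pos N0 by (simp add: self_le_power)
    then have Q3: "Q \<ge> 3" using q_ge3 unfolding Q_def by simp
    have QS: "Q = Suc (Q - 1)" using Q3 by simp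
    have powQ: "x^Q = x^(Q-1) * x" for x :: 'k by (subst QS) (simp only: power_Suc2)
    have Qodd: "odd Q" using qodd unfolding Q_def by simp
    have ofQ: "of_nat Q = (0::'k)" using q0 N0 unfolding Q_def by simp
    have ofQm: "of_nat (Q - 1) \<noteq> (0::'k)"
    proof
      assume h: "of_nat (Q - 1) = (0::'k)"
      have "of_nat Q = (of_nat (Q - 1) + 1 :: 'k)" using Q3 by (simp add: of_nat_diff)
      then show False using h ofQ by simp
    qed
    have ofQp: "of_nat (Q + 1) \<noteq> (0::'k)" using ofQ by simp
    define F1 where "F1 = {x::'k. x^(Q-1) = c}"
    define F2 where "F2 = {x::'k. x^(Q+1) = c}"
    have cF1: "card F1 = Q - 1" unfolding F1_def by (rule card_roots[OF c0 ofQm]) (use Q3 in simp)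
    have cF2: "card F2 = Q + 1" unfolding F2_def by (rule card_roots[OF c0 ofQp]) simp
    have fF1: "finite F1" using cF1 Q3 by (intro card_ge_0_finite) simp
    have fF2: "finite F2" using cF2 by (intro card_ge_0_finite) simp
    obtain t where t: "Q = 2*t+1" using Qodd oddE by blast
    have ev1: "even (Q - 1)" "even (Q + 1)" using t by simp_all
    have pm1: "x^(Q-1) = 1 \<and> x^(Q+1) = (1::'k)" if x: "x \<in> {1,-1}" for x
    proof (cases "x = 1")
      case True then show ?thesis by simp
    next
      case False
      then have "x = -1" using x by simp
      then show ?thesis using ev1 by (simp only: neg_one_even_power)
    qed
    have I: "F1 \<inter> {1,-1} = F2 \<inter> {1,-1}"
    proof (intro set_eqI)
      fix x
      show "x \<in> F1 \<inter> {1,-1} \<longleftrightarrow> x \<in> F2 \<inter> {1,-1}"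
      proof (cases "x \<in> {1,-1}")
        case True
        then show ?thesis using pm1[OF True] unfolding F1_def F2_def by simp
      next
        case False
        then show ?thesis by blast
      qed
    qed
    have S1: "{l\<in>RR k. (g^^N) l = l} = F1 - {1,-1}"
    proof -
      have "{l\<in>RR k. (g^^N) l = l} = {l\<in>ktri. (g^^N) l = l}"
        using fix_in_RR[OF _ N0] N by (auto simp: RR_def)
      also have "\<dots> = F1 - {1,-1}"
      proof (intro set_eqI iffI)
        fix l assume "l \<in> {l\<in>ktri. (g^^N) l = l}"
        then have l: "l \<in> ktri" "c * l^Q = l" using gN by auto
        have l0: "l \<noteq> 0" using l by (simp add: ktri_def)
        have "c * l^(Q-1) * l = 1 * l" using l(2) by (simp add: powQ mult.assoc)
        then have "c * l^(Q-1) = 1" using l0 by simp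
        then have "c * (c * l^(Q-1)) = c" by simp
        then have "l^(Q-1) = c" by (simp add: mult.assoc[symmetric] cc)
        then show "l \<in> F1 - {1,-1}" using l by (simp add: F1_def ktri_def)
      next
        fix l assume "l \<in> F1 - {1,-1}"
        then have l: "l^(Q-1) = c" "l \<noteq> 1" "l \<noteq> -1" by (auto simp: F1_def)
        have l0: "l \<noteq> 0"
        proof
          assume l00: "l = 0"
          have "c = l^(Q-1)" using l(1) by simp
          also have "\<dots> = 0" unfolding l00 using Q3 by (simp add: power_0_left)
          finally show False using c0 by simp
        qed
        have "c * l^Q = c * (l^(Q-1) * l)" by (simp add: powQ)
        also have "\<dots> = l" using l(1) by (simp add: mult.assoc[symmetric] cc)
        finally show "l \<in> {l\<in>ktri. (g^^N) l = l}" using l l0 gN by (simp add: ktri_def)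
      qed
      finally show ?thesis .
    qed
    have S2: "{l\<in>RR k. (g^^N) l = inverse l} = F2 - {1,-1}"
    proof -
      have "{l\<in>RR k. (g^^N) l = inverse l} = {l\<in>ktri. (g^^N) l = inverse l}"
        using inv_in_RR[OF _ N0] N by (auto simp: RR_def)
      also have "\<dots> = F2 - {1,-1}"
      proof (intro set_eqI iffI)
        fix l assume "l \<in> {l\<in>ktri. (g^^N) l = inverse l}"
        then have l: "l \<in> ktri" "c * l^Q = inverse l" using gN by auto
        have l0: "l \<noteq> 0" using l by (simp add: ktri_def)
        have "c * l^(Q+1) = c * l^Q * l" by (simp add: mult.assoc)
        also have "\<dots> = 1" using l(2) l0 by simp
        finally have "c * (c * l^(Q+1)) = c" by simp
        then have "l^(Q+1) = c" by (simp add: mult.assoc[symmetric] cc)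
        then show "l \<in> F2 - {1,-1}" using l by (simp add: F2_def ktri_def)
      next
        fix l assume "l \<in> F2 - {1,-1}"
        then have l: "l^(Q+1) = c" "l \<noteq> 1" "l \<noteq> -1" by (auto simp: F2_def)
        have l0: "l \<noteq> 0" using l(1) c0 by auto
        have "c * l^Q * l = c * l^(Q+1)" by (simp add: mult.assoc)
        also have "\<dots> = 1" using l(1) cc by simp
        finally have "c * l^Q = inverse l" using l0 by (simp add: field_simps)
        then show "l \<in> {l\<in>ktri. (g^^N) l = inverse l}" using l l0 gN by (simp add: ktri_def)
      qed
      finally show ?thesis .
    qed
    have "pp k = (\<Sum>l\<in>RR k. (if (g^^N) l = l then 1 else 0) - (if (g^^N) l = inverse l then 1 else 0))"
      using pp1 True kd by simp
    also have "\<dots> = (\<Sum>l\<in>RR k. (if (g^^N) l = l then 1 else 0)) - (\<Sum>l\<in>RR k. (if (g^^N) l = inverse l then 1 else (0::int)))"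
      by (rule sum_subtractf)
    also have "(\<Sum>l\<in>RR k. (if (g^^N) l = l then 1 else 0)) = (\<Sum>l\<in>{l\<in>RR k. (g^^N) l = l}. (1::int))"
      by (rule sum.inter_filter[symmetric, OF finite_RR])
    also have "\<dots> = int (card (F1 - {1,-1}))" using S1 by simp
    also have "(\<Sum>l\<in>RR k. (if (g^^N) l = inverse l then 1 else 0)) = (\<Sum>l\<in>{l\<in>RR k. (g^^N) l = inverse l}. (1::int))"
      by (rule sum.inter_filter[symmetric, OF finite_RR])
    also have "\<dots> = int (card (F2 - {1,-1}))" using S2 by simp
    finally have "pp k = int (card F1) - int (card (F1 \<inter> {1,-1})) - (int (card F2) - int (card (F2 \<inter> {1,-1})))"
      using card_diff_pm1[OF fF1] card_diff_pm1[OF fF2] by simp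
    then have "pp k = int (Q - 1) - int (Q + 1)" using I cF1 cF2 by simp
    then show ?thesis using True Q3 by simp
  qed
qed


lemma aa0: "aa 0 = 1"
proof -
  have "Mset 0 = {{#}}"
  proof
    show "Mset 0 \<subseteq> {{#}}" by (auto simp: Mset_def)
    show "{{#}} \<subseteq> Mset 0" by (simp add: Mset_def)
  qed
  moreover have "JJ {#} = 0" by (simp add: JJ_def)
  ultimately show ?thesis by (simp add: aa_def sg_def)
qed

lemma aa_all: "aa n = (if n = 0 then 1 else if n = 2 then -1 else 0)"
proof (induction n rule: less_induct)
  case (less n)
  have IH: "k \<in> {1..n} \<Longrightarrow> aa (n - k) = (if n - k = 0 then 1 else if n - k = 2 then -1 else 0)" for k
    using less by simp
  show ?case
  proof (cases "n = 0")
    case True then show ?thesis by (simp add: aa0)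
  next
    case False
    have NW: "int n * aa n = (\<Sum>k\<in>{1..n}. aa (n - k) * pp k)" by (rule newton)
    show ?thesis
    proof (cases "n = 1")
      case True
      have "int n * aa n = aa 0 * pp 1" using NW True by simp
      then have "aa n = 0" using True pp_val[of 1] by simp
      then show ?thesis using True by simp
    next
      case n1: False
      show ?thesis
      proof (cases "n = 2")
        case True
        have "{1..n} = {1, 2}" using True by auto
        then have "int n * aa n = aa 1 * pp 1 + aa 0 * pp 2" using NW True by simp
        moreover have "aa 1 = 0" using IH[of 1] True by simp
        moreover have "pp 2 = -2" using pp_val[of 2] by simp
        ultimately have "2 * aa n = -2" using True aa0 by simp
        then show ?thesis using True by simp
      next
        case n2: False
        have n3: "n \<ge> 3" using False n1 n2 by simp
        have "(\<Sum>k\<in>{1..n}. aa (n - k) * pp k) = (\<Sum>k\<in>{n-2, n}. aa (n - k) * pp k)"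
        proof (rule sum.mono_neutral_right)
          show "{n-2, n} \<subseteq> {1..n}" using n3 by auto
          show "\<forall>k\<in>{1..n} - {n-2, n}. aa (n - k) * pp k = 0"
          proof
            fix k assume k: "k \<in> {1..n} - {n-2, n}"
            then have "n - k \<noteq> 0" "n - k \<noteq> 2" by auto
            then show "aa (n - k) * pp k = 0" using IH[of k] k by simp
          qed
        qed simp
        also have "\<dots> = aa 2 * pp (n-2) + aa 0 * pp n"
          using n3 by simp
        also have "aa 2 = -1" using IH[of "n-2"] n3 by simp
        also have "pp (n-2) = pp n" using pp_val[of "n-2"] pp_val[of n] n3 by simp
        finally have "int n * aa n = 0" using NW aa0 by simp
        then show ?thesis using n3 by simp
      qed
    qed
  qed
qed

end

theorem mainTheorem6:
  fixes q e n :: nat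
  assumes "alg_closure_of_Fq TYPE('k::field) q"
    and "odd q"
    and "e < 2"
    and "even n"
  shows "(\<Sum>D\<in>(gA0 q e n :: 'k poly set). (-1::int) ^ jD q e D)
           = (if n \<ge> 4 then 0 else if n = 2 then -1 else 1)"
proof -
  obtain p m where pm: "prime p" "m > 0" "q = p ^ m" "CHAR('k) = p"
    and cl: "\<forall>P :: 'k poly. degree P \<ge> 1 \<longrightarrow> (\<exists>x. poly P x = 0)"
    and fn: "\<forall>x :: 'k. \<exists>r > 0. x ^ (q ^ r) = x"
    using assms(1) unfolding alg_closure_of_Fq_def by blast
  have "of_nat p = (0::'k)" using pm(4) of_nat_CHAR by metis
  then have q0: "of_nat q = (0::'k)" using pm(2,3) by (simp add: of_nat_power)
  interpret S: setting q e "TYPE('k)"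
    by unfold_locales (use assms(2,3) q0 cl fn in auto)
  show ?thesis using S.main_sum[of n] S.aa_all[of n] assms(4) by auto
qed

end
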